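(* Let $(\pi_1,\dots,\pi_R)$ be arbitrary probabilities (nonnegative, summing to 1), $N\in\mathbb N$, and $U$ uniform on $(0,1)$. Define $$N_j=\Big|\Big[N\sum_{i=1}^{j-1}\pi_i+U,\ N\sum_{i=1}^{j}\pi_i+U\Big)\cap\{1,2,\dots,N\}\Big|,\qquad j=1,\dots,R.$$ Then for any $j<k$, $\operatorname{Cov}(N_j,N_k)=F(r_l,r_m,r_u)$ for a function $F$ depending only on $r_l=N\pi_j\bmod 1$, $r_u=N\pi_k\bmod1$ and $r_m=N\sum_{i=j+1}^{k-1}\pi_i\bmod1$. Moreover, for all $r_l,r_u\in[0,1)$, $\int_0^1F(r_l,r,r_u)\,dr=0$.
   Context: $|A|$ denotes the number of elements of a finite set $A$. *)

theory Defs
  imports "HOL-Probability.Probability"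
begin

definition unif01 :: "real measure" where
  "unif01 = uniform_measure lborel {0<..<1}"

definition covar :: "'a measure \<Rightarrow> ('a \<Rightarrow> real) \<Rightarrow> ('a \<Rightarrow> real) \<Rightarrow> real" where
  "covar M X Y = (\<integral>x. X x * Y x \<partial>M) - (\<integral>x. X x \<partial>M) * (\<integral>x. Y x \<partial>M)"

definition sys_count :: "nat \<Rightarrow> (nat \<Rightarrow> real) \<Rightarrow> nat \<Rightarrow> real \<Rightarrow> nat" where
  "sys_count N p j u = card {n \<in> {1..N}.
      real N * (\<Sum>i=1..<j. p i) + u \<le> real n \<and> real n < real N * (\<Sum>i=1..j. p i) + u}"

end

theory Submission
  imports Defs
begin


definition qf :: "real \<Rightarrow> real" where "qf x = frac x * (1 - frac x)"

lemma qf_shift[simp]: "qf (x + of_int n) = qf x" "qf (x - of_int n) = qf x"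
   apply (simp add: qf_def)
  by (metis diff_conv_add_uminus frac_add_of_int_right of_int_minus qf_def)

lemma qf_neg: "qf (- x) = qf x"
  by (simp add: qf_def frac_neg algebra_simps)

lemma qf_frac: "qf (frac x) = qf x"
  by (simp add: qf_def)

lemma qf_nonneg: "0 \<le> qf x" and qf_le: "qf x \<le> 1"
proof -
  have a: "0 \<le> frac x" "frac x < 1" using frac_lt_1[of x] frac_ge_0[of x] by auto
  then show "0 \<le> qf x" by (simp add: qf_def)
  have "frac x * (1 - frac x) \<le> frac x * 1" by (rule mult_left_mono) (use a in auto)
  then show "qf x \<le> 1" using a by (simp add: qf_def)
qed

lemma qf_int01: assumes "s \<in> {0..<1}" shows "((\<lambda>r. qf (r + s)) has_integral 1/6) {0..1}"
proof -
  have s: "0 \<le> s" "s < 1" using assms by auto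
  define P1 where "P1 r = (r+s)^2/2 - (r+s)^3/3" for r :: real
  define P2 where "P2 r = (r+s-1)^2/2 - (r+s-1)^3/3" for r :: real
  have i1: "((\<lambda>r. (r+s) - (r+s)^2) has_integral (P1 (1-s) - P1 0)) {0..1-s}"
    apply (rule fundamental_theorem_of_calculus)
    using s apply simp
    unfolding P1_def
    by (auto intro!: derivative_eq_intros simp: has_real_derivative_iff_has_vector_derivative[symmetric] power2_eq_square)
  have i2: "((\<lambda>r. (r+s-1) - (r+s-1)^2) has_integral (P2 1 - P2 (1-s))) {1-s..1}"
    apply (rule fundamental_theorem_of_calculus)
    using s apply simp
    unfolding P2_def
    by (auto intro!: derivative_eq_intros simp: has_real_derivative_iff_has_vector_derivative[symmetric] power2_eq_square)
  have j1: "((\<lambda>r. qf (r + s)) has_integral (P1 (1-s) - P1 0)) {0..1-s}"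
  proof (rule has_integral_eq[OF _ i1])
    fix r assume r: "r \<in> {0..1-s}"
    show "(r+s) - (r+s)^2 = qf (r+s)"
    proof (cases "r + s < 1")
      case True then show ?thesis using r s by (simp add: qf_def frac_eq power2_eq_square algebra_simps)
    next
      case False then have "r + s = 1" using r by auto
      then show ?thesis by (simp add: qf_def)
    qed
  qed
  have j2: "((\<lambda>r. qf (r + s)) has_integral (P2 1 - P2 (1-s))) {1-s..1}"
  proof (rule has_integral_eq[OF _ i2])
    fix r assume r: "r \<in> {1-s..1}"
    have "frac (r + s - 1) = r + s - 1" using r s by (simp add: frac_eq)
    moreover have "frac (r+s) = frac (r + s - 1)" 
      using frac_add_of_int_right[of "r+s-1" 1] by simp
    ultimately have "frac (r+s) = r + s - 1" by simp
    then show "(r+s-1) - (r+s-1)^2 = qf (r+s)"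
      unfolding qf_def by (simp only:) (simp add: power2_eq_square algebra_simps)
  qed
  have "((\<lambda>r. qf (r + s)) has_integral ((P1 (1-s) - P1 0) + (P2 1 - P2 (1-s)))) {0..1}"
    by (rule has_integral_combine[OF _ _ j1 j2]) (use s in auto)
  moreover have "(P1 (1-s) - P1 0) + (P2 1 - P2 (1-s)) = 1/6"
    unfolding P1_def P2_def by (simp add: power2_eq_square power3_eq_cube algebra_simps)
  ultimately show ?thesis by simp
qed

lemma qf_int: "((\<lambda>r. qf (r + s)) has_integral 1/6) {0..1}"
proof -
  have "(\<lambda>r. qf (r + s)) = (\<lambda>r. qf (r + frac s))"
  proof
    fix r
    have "r + s = (r + frac s) + of_int \<lfloor>s\<rfloor>" by (simp add: frac_def)
    then show "qf (r + s) = qf (r + frac s)" by (metis qf_shift(1))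
  qed
  moreover have "frac s \<in> {0..<1}" using frac_lt_1 frac_ge_0 by auto
  ultimately show ?thesis using qf_int01 by metis
qed

lemma qf_meas[measurable]: "qf \<in> borel_measurable borel"
  unfolding qf_def frac_def by measurable

definition FF :: "real \<Rightarrow> real \<Rightarrow> real \<Rightarrow> real" where
  "FF x y z = (qf y + qf (x+y+z) - qf (y+z) - qf (x+y)) / 2"

lemma FF_int: "interval_lebesgue_integrable lborel 0 1 (\<lambda>r. FF rl r ru) \<and> (LBINT r=0..1. FF rl r ru) = 0"
proof -
  let ?f = "\<lambda>r. FF rl r ru"
  have h: "(?f has_integral 0) {0..1}"
  proof -
    have "((\<lambda>r. (qf (r + 0) + qf (r + (rl+ru)) - qf (r + ru) - qf (r + rl)) / 2) has_integral
       (1/6 + 1/6 - 1/6 - 1/6) / 2) {0..1}"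
      by (intro has_integral_divide has_integral_diff has_integral_add qf_int)
    then show ?thesis unfolding FF_def by (simp add: algebra_simps)
  qed
  have meas: "?f \<in> borel_measurable lborel" unfolding FF_def by measurable
  have si: "set_integrable lborel {0..1} ?f"
    unfolding set_integrable_def
  proof (rule Bochner_Integration.integrable_bound[where f="indicator {0..1::real}"])
    show "integrable lborel (indicator {0..1::real} :: real \<Rightarrow> real)" by simp
    show "(\<lambda>x. indicator {0..1} x *\<^sub>R ?f x) \<in> borel_measurable lborel" using meas by measurable
    show "AE x in lborel. norm (indicator {0..1} x *\<^sub>R ?f x) \<le> norm (indicator {0..1::real} x :: real)"
    proof (rule AE_I2)
      fix x
      have "\<bar>?f x\<bar> \<le> 1" unfolding FF_def
        using qf_nonneg[of x] qf_le[of x] qf_nonneg[of "rl+x+ru"] qf_le[of "rl+x+ru"]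
          qf_nonneg[of "x+ru"] qf_le[of "x+ru"] qf_nonneg[of "rl+x"] qf_le[of "rl+x"] by simp
      then show "norm (indicator {0..1} x *\<^sub>R ?f x) \<le> norm (indicator {0..1::real} x :: real)"
        by (auto simp: indicator_def)
    qed
  qed
  have "interval_lebesgue_integrable lborel (ereal 0) (ereal 1) ?f"
    unfolding interval_lebesgue_integrable_def
    using set_integrable_subset[OF si, of "{0<..<1}"] by (simp add: subset_eq)
  moreover have "(LBINT r=ereal 0..ereal 1. ?f r) = 0"
    using interval_integral_Icc[of 0 1 ?f] set_borel_integral_eq_integral(2)[OF si] h
    by (simp add: integral_unique)
  ultimately show ?thesis by (simp add: zero_ereal_def one_ereal_def)
qed



lemma card_int_interval:
  fixes x y :: real
  assumes "0 < x" "x \<le> y" "y < real N + 1"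
  shows "real (card {n \<in> {1..N}. x \<le> real n \<and> real n < y}) = of_int \<lceil>y\<rceil> - of_int \<lceil>x\<rceil>"
proof -
  have cx: "1 \<le> \<lceil>x\<rceil>" using assms by simp 
  have cy: "\<lceil>y\<rceil> \<le> int N + 1" using assms by (simp add: ceiling_le_iff)
  have cxy: "\<lceil>x\<rceil> \<le> \<lceil>y\<rceil>" using assms by (simp add: ceiling_mono)
  have "{n \<in> {1..N}. x \<le> real n \<and> real n < y} = {nat \<lceil>x\<rceil>..<nat \<lceil>y\<rceil>}"
  proof (intro set_eqI iffI)
    fix n assume "n \<in> {n \<in> {1..N}. x \<le> real n \<and> real n < y}"
    then have h: "x \<le> real n" "real n < y" by auto
    have "\<lceil>x\<rceil> \<le> int n" using h(1) ceiling_le_iff[of x "int n"] by simp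
    moreover have "int n < \<lceil>y\<rceil>" using h(2) less_ceiling_iff[of "int n" y] by simp
    ultimately show "n \<in> {nat \<lceil>x\<rceil>..<nat \<lceil>y\<rceil>}" using h by auto
  next
    fix n assume "n \<in> {nat \<lceil>x\<rceil>..<nat \<lceil>y\<rceil>}"
    then have m: "nat \<lceil>x\<rceil> \<le> n" "n < nat \<lceil>y\<rceil>" by (simp_all only: atLeastLessThan_iff)
    have a: "\<lceil>x\<rceil> \<le> int n" "int n < \<lceil>y\<rceil>" using m cx by arith+
    have "x \<le> real n"
      using le_of_int_ceiling[of x] a(1) by (smt (verit) of_int_le_iff of_int_of_nat_eq)
    moreover have "real n < y" using a(2) less_ceiling_iff[of "int n" y] by simp
    moreover have "1 \<le> n" "n \<le> N" using a cx cy by arith+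
    ultimately show "n \<in> {n \<in> {1..N}. x \<le> real n \<and> real n < y}" by auto
  qed
  then have "card {n \<in> {1..N}. x \<le> real n \<and> real n < y} = nat \<lceil>y\<rceil> - nat \<lceil>x\<rceil>" by simp
  moreover have "int (nat \<lceil>y\<rceil> - nat \<lceil>x\<rceil>) = \<lceil>y\<rceil> - \<lceil>x\<rceil>" using cx cxy by arith
  ultimately show ?thesis by (metis of_int_diff of_int_of_nat_eq)
qed

lemma ceil_ind:
  fixes X u :: real
  assumes "0 < u" "u < 1"
  shows "real_of_int \<lceil>X + u\<rceil> = of_int \<lfloor>X\<rfloor> + 1 + indicator {1 - frac X<..} u"
proof -
  have "X + u = (frac X + u) + of_int \<lfloor>X\<rfloor>" by (simp add: frac_def)
  then have e: "\<lceil>X + u\<rceil> = \<lceil>frac X + u\<rceil> + \<lfloor>X\<rfloor>" by (metis ceiling_add_of_int)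
  have fX: "0 \<le> frac X" "frac X < 1" by (auto simp: frac_lt_1)
  show ?thesis
  proof (cases "frac X + u \<le> 1")
    case True
    then have "\<lceil>frac X + u\<rceil> = 1" using fX assms by (intro ceiling_unique) linarith+
    then show ?thesis using e True by (simp add: indicator_def)
  next
    case False
    then have "\<lceil>frac X + u\<rceil> = 2" using fX assms by (intro ceiling_unique) linarith+
    then show ?thesis using e False by (simp add: indicator_def)
  qed
qed

lemma sc_step:
  fixes A B u :: real
  assumes "0 \<le> A" "A \<le> B" "B \<le> real N" "0 < u" "u < 1"
  shows "real (card {n \<in> {1..N}. A + u \<le> real n \<and> real n < B + u}) =
     of_int (\<lfloor>B\<rfloor> - \<lfloor>A\<rfloor>) + indicator {1 - frac B<..} u - indicator {1 - frac A<..} u"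
  using card_int_interval[of "A+u" "B+u" N] assms ceil_ind[of u A] ceil_ind[of u B] by simp

lemma unif_sets: "sets unif01 = sets borel"
  by (simp add: unif01_def)

lemma unif_emeasure: "emeasure lborel {0<..<1::real} = 1" by simp

lemma unif_prob: "prob_space unif01"
  unfolding unif01_def by (rule prob_space_uniform_measure) auto

lemma unif_ind:
  assumes "0 \<le> t" "t \<le> 1"
  shows "(\<integral>u. indicator {t<..} u \<partial>unif01) = 1 - (t::real)"
proof -
  interpret prob_space unif01 by (rule unif_prob)
  have "(\<integral>u. indicator {t<..} u \<partial>unif01) = measure unif01 {t<..}"
    by (simp add: unif01_def)
  also have "\<dots> = measure lborel ({0<..<1} \<inter> {t<..}) / measure lborel {0<..<1::real}"
    unfolding unif01_def by (rule measure_uniform_measure) auto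
  also have "{0<..<1} \<inter> {t<..} = {t<..<1::real}" using assms by auto
  finally show ?thesis using assms by simp
qed

lemma unif_int_ind[simp]: "integrable unif01 (indicator {t<..} :: real \<Rightarrow> real)"
proof -
  interpret prob_space unif01 by (rule unif_prob)
  show ?thesis by (rule integrable_real_indicator) (auto simp: unif_sets emeasure_finite less_top[symmetric])
qed

lemma unif_int_const[simp]: "integrable unif01 (\<lambda>u. c::real)"
proof -
  interpret prob_space unif01 by (rule unif_prob)
  show ?thesis by simp
qed

lemma unif_const[simp]: "(\<integral>u. c \<partial>unif01) = (c::real)"
proof -
  interpret prob_space unif01 by (rule unif_prob)
  show ?thesis using prob_space by simp
qed

lemma ind_mult: "indicator {s<..} (u::real) * indicator {t<..} u = (indicator {max s t<..} u :: real)"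
  by (cases "s \<le> t") (auto simp: indicator_def max_def)

lemma unif_meas1[simp]: "measure unif01 (space unif01) = 1"
proof -
  interpret prob_space unif01 by (rule unif_prob)
  show ?thesis using prob_space by simp
qed

lemma unif_meas2[simp]: "0 \<le> t \<Longrightarrow> t \<le> 1 \<Longrightarrow> measure unif01 ({t<..} \<inter> space unif01) = 1 - t"
  using unif_ind[of t] by simp

definition Cv :: "real \<Rightarrow> real \<Rightarrow> real" where "Cv s t = (1 - max s t) - (1 - s) * (1 - t)"

lemma covar_step:
  fixes K L s1 s2 t1 t2 :: real
  assumes "s1 \<in> {0..1}" "s2 \<in> {0..1}" "t1 \<in> {0..1}" "t2 \<in> {0..1}"
  shows "covar unif01 (\<lambda>u. K + indicator {s1<..} u - indicator {s2<..} u)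
                     (\<lambda>u. L + indicator {t1<..} u - indicator {t2<..} u)
        = Cv s1 t1 - Cv s1 t2 - Cv s2 t1 + Cv s2 t2"
proof -
  let ?i = "\<lambda>t u. indicator {t<..} u :: real"
  have e: "(\<lambda>u. (K + ?i s1 u - ?i s2 u) * (L + ?i t1 u - ?i t2 u)) =
    (\<lambda>u. K * L + K * ?i t1 u - K * ?i t2 u + L * ?i s1 u - L * ?i s2 u
       + ?i (max s1 t1) u - ?i (max s1 t2) u - ?i (max s2 t1) u + ?i (max s2 t2) u)"
    by (auto simp: algebra_simps ind_mult[symmetric])
  have m: "max s t \<in> {0..1}" if "s \<in> {0..1}" "t \<in> {0..1}" for s t :: real
    using that by auto
  show ?thesis
    unfolding covar_def e
    using assms m[of s1 t1] m[of s1 t2] m[of s2 t1] m[of s2 t2]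
    by (simp add: Cv_def algebra_simps)
qed



lemma Kq: assumes "x \<in> {0..<1}" "y \<in> {0..<1}"
  shows "min x y - x*y = (qf x + qf y - qf (x - y))/2"
proof (cases "y \<le> x")
  case True
  then have "frac (x - y) = x - y" using assms by (simp add: frac_eq)
  then show ?thesis using assms True by (simp add: qf_def min_def algebra_simps power2_eq_square)
next
  case False
  have "frac (x - y) = frac (x - y + 1)" using frac_add_of_int_right[of "x-y" 1] by simp
  also have "\<dots> = x - y + 1" using assms False by (simp add: frac_eq)
  finally have e: "frac (x - y) = x - y + 1" .
  have e2: "frac x = x" "frac y = y" using assms by (auto simp: frac_eq)
  show ?thesis unfolding qf_def e e2 using False by (simp add: min_def algebra_simps)
qed

lemma qf_fracdiff: "qf (frac x - frac y) = qf (x - y)"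
proof -
  have "frac x - frac y = (x - y) - of_int (\<lfloor>x\<rfloor> - \<lfloor>y\<rfloor>)" by (simp add: frac_def)
  then show ?thesis by (simp only:) (rule qf_shift(2))
qed

lemma qf_fracadd2: "qf (frac x + frac y) = qf (x + y)"
proof -
  have "frac x + frac y = (x + y) - of_int (\<lfloor>x\<rfloor> + \<lfloor>y\<rfloor>)" by (simp add: frac_def)
  then show ?thesis by (simp only:) (rule qf_shift(2))
qed

lemma qf_fracadd3: "qf (frac x + frac y + frac z) = qf (x + y + z)"
proof -
  have "frac x + frac y + frac z = (x + y + z) - of_int (\<lfloor>x\<rfloor> + \<lfloor>y\<rfloor> + \<lfloor>z\<rfloor>)" by (simp add: frac_def)
  then show ?thesis by (simp only:) (rule qf_shift(2))
qed


lemma Cv_q: "Cv (1 - frac x) (1 - frac y) = (qf x + qf y - qf (x - y))/2"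
proof -
  have f: "frac x \<in> {0..<1}" "frac y \<in> {0..<1}" by (auto simp: frac_lt_1)
  have "Cv (1 - frac x) (1 - frac y) = min (frac x) (frac y) - frac x * frac y"
    by (simp add: Cv_def max_def min_def algebra_simps)
  also have "\<dots> = (qf (frac x) + qf (frac y) - qf (frac x - frac y))/2" by (rule Kq[OF f])
  finally show ?thesis by (simp add: qf_frac qf_fracdiff)
qed

lemma final_alg:
  "Cv (1 - frac b) (1 - frac d) - Cv (1 - frac b) (1 - frac c) - Cv (1 - frac a) (1 - frac d)
     + Cv (1 - frac a) (1 - frac c) = FF (frac (b - a)) (frac (c - b)) (frac (d - c))"
proof -
  have n: "qf (b - d) = qf (d - b)" "qf (a - d) = qf (d - a)" "qf (a - c) = qf (c - a)" "qf (b - c) = qf (c - b)"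
    using qf_neg[of "d-b"] qf_neg[of "d-a"] qf_neg[of "c-a"] qf_neg[of "c-b"] by simp_all
  have h: "FF (frac (b - a)) (frac (c - b)) (frac (d - c)) = (qf (c-b) + qf (d-a) - qf (d-b) - qf (c-a))/2"
    unfolding FF_def qf_frac qf_fracadd2 qf_fracadd3 by (simp add: algebra_simps)
  show ?thesis unfolding Cv_q n h by (simp add: field_simps)
qed


lemma covar_cong:
  assumes [measurable]: "f \<in> borel_measurable borel" "f' \<in> borel_measurable borel"
    "g \<in> borel_measurable borel" "g' \<in> borel_measurable borel"
  and eq: "\<And>u. u \<in> {0<..<1} \<Longrightarrow> f u = f' u \<and> g u = g' u"
  shows "covar unif01 f g = covar unif01 f' g'"
proof -
  have ae: "AE u in unif01. f u = f' u \<and> g u = g' u"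
    unfolding unif01_def
  proof (rule AE_uniform_measureI)
    show "{0<..<1::real} \<in> sets lborel" by simp
    show "AE x in lborel. x \<in> {0<..<1} \<longrightarrow> f x = f' x \<and> g x = g' x"
      by (rule AE_I2) (use eq in blast)
  qed
  have mc: "measurable unif01 borel = measurable borel borel"
    by (rule measurable_cong_sets[OF unif_sets refl])
  have m1: "(\<lambda>u. f u * g u) \<in> borel_measurable unif01" "(\<lambda>u. f' u * g' u) \<in> borel_measurable unif01"
    "f \<in> borel_measurable unif01" "f' \<in> borel_measurable unif01"
    "g \<in> borel_measurable unif01" "g' \<in> borel_measurable unif01"
    unfolding mc by measurable
  have 1: "(\<integral>u. f u * g u \<partial>unif01) = (\<integral>u. f' u * g' u \<partial>unif01)"
    by (rule integral_cong_AE[OF m1(1,2)]) (use ae in \<open>eventually_elim, simp\<close>)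
  have 2: "(\<integral>u. f u \<partial>unif01) = (\<integral>u. f' u \<partial>unif01)"
    by (rule integral_cong_AE[OF m1(3,4)]) (use ae in \<open>eventually_elim, simp\<close>)
  have 3: "(\<integral>u. g u \<partial>unif01) = (\<integral>u. g' u \<partial>unif01)"
    by (rule integral_cong_AE[OF m1(5,6)]) (use ae in \<open>eventually_elim, simp\<close>)
  show ?thesis unfolding covar_def 1 2 3 ..
qed

lemma sys_meas: "(\<lambda>u. real (sys_count N p j u)) \<in> borel_measurable borel"
proof -
  have "sys_count N p j u = (\<Sum>n\<in>{1..N}.
      if real N * (\<Sum>i=1..<j. p i) + u \<le> real n \<and> real n < real N * (\<Sum>i=1..j. p i) + u then 1 else 0)" for u
    unfolding sys_count_def card_eq_sum by (rule sum.inter_filter) simp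
  then have "(\<lambda>u. real (sys_count N p j u)) = (\<lambda>u. \<Sum>n\<in>{1..N}. real (
      if real N * (\<Sum>i=1..<j. p i) + u \<le> real n \<and> real n < real N * (\<Sum>i=1..j. p i) + u then 1 else (0::nat)))"
    by (simp only: of_nat_sum)
  also have "\<dots> \<in> borel_measurable borel" by measurable
  finally show ?thesis .
qed



lemma bounds:
  fixes p :: "nat \<Rightarrow> real"
  assumes nn: "\<forall>i\<in>{1..R}. 0 \<le> p i" and s1: "(\<Sum>i=1..R. p i) = 1" and m: "1 \<le> m" "m \<le> R"
  shows "0 \<le> (\<Sum>i=1..<m. p i)" "(\<Sum>i=1..m. p i) = (\<Sum>i=1..<m. p i) + p m"
    "(\<Sum>i=1..m. p i) \<le> 1" "0 \<le> p m"
proof -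
  show "0 \<le> (\<Sum>i=1..<m. p i)" using nn m by (intro sum_nonneg) auto
  show "(\<Sum>i=1..m. p i) = (\<Sum>i=1..<m. p i) + p m"
    using m by (simp add: atLeastLessThanSuc_atLeastAtMost[symmetric] sum.atLeastLessThan_Suc)
  have "(\<Sum>i=1..m. p i) \<le> (\<Sum>i=1..R. p i)" using nn m by (intro sum_mono2) auto
  then show "(\<Sum>i=1..m. p i) \<le> 1" using s1 by simp
  show "0 \<le> p m" using nn m by auto
qed

lemma step_form:
  fixes p :: "nat \<Rightarrow> real"
  assumes nn: "\<forall>i\<in>{1..R}. 0 \<le> p i" and s1: "(\<Sum>i=1..R. p i) = 1" and m: "1 \<le> m" "m \<le> R"
    and u: "u \<in> {0<..<1}"
  shows "real (sys_count N p m u) = of_int (\<lfloor>real N * (\<Sum>i=1..m. p i)\<rfloor> - \<lfloor>real N * (\<Sum>i=1..<m. p i)\<rfloor>)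
     + indicator {1 - frac (real N * (\<Sum>i=1..m. p i))<..} u - indicator {1 - frac (real N * (\<Sum>i=1..<m. p i))<..} u"
  unfolding sys_count_def
proof (rule sc_step)
  note b = bounds[OF nn s1 m]
  show "0 \<le> real N * (\<Sum>i=1..<m. p i)" using b by simp
  show "real N * (\<Sum>i=1..<m. p i) \<le> real N * (\<Sum>i=1..m. p i)" using b by (intro mult_left_mono) auto
  show "real N * (\<Sum>i=1..m. p i) \<le> real N" using b by (intro mult_left_le) auto
  show "0 < u" "u < 1" using u by auto
qed

theorem lemma2:
  shows "\<exists>F :: real \<Rightarrow> real \<Rightarrow> real \<Rightarrow> real.
     (\<forall>(R::nat) (p::nat \<Rightarrow> real) (N::nat) (j::nat) (k::nat).
        (\<forall>i\<in>{1..R}. 0 \<le> p i) \<and> (\<Sum>i=1..R. p i) = 1 \<and> 1 \<le> j \<and> j < k \<and> k \<le> R \<longrightarrow>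
        covar unif01 (\<lambda>u. real (sys_count N p j u)) (\<lambda>u. real (sys_count N p k u))
          = F (frac (real N * p j)) (frac (real N * (\<Sum>i=j+1..<k. p i))) (frac (real N * p k)))
   \<and> (\<forall>rl ru. 0 \<le> rl \<and> rl < 1 \<and> 0 \<le> ru \<and> ru < 1 \<longrightarrow>
        interval_lebesgue_integrable lborel 0 1 (\<lambda>r. F rl r ru) \<and> (LBINT r=0..1. F rl r ru) = 0)"
proof (intro exI[of _ FF] conjI allI impI)
  fix rl ru :: real
  show "interval_lebesgue_integrable lborel 0 1 (\<lambda>r. FF rl r ru)" using FF_int by blast
next
  fix rl ru :: real
  show "(LBINT r=0..1. FF rl r ru) = 0" using FF_int by blast
next
  fix R N j k :: nat and p :: "nat \<Rightarrow> real"
  assume H: "(\<forall>i\<in>{1..R}. 0 \<le> p i) \<and> (\<Sum>i=1..R. p i) = 1 \<and> 1 \<le> j \<and> j < k \<and> k \<le> R"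
  then have nn: "\<forall>i\<in>{1..R}. 0 \<le> p i" and s1: "(\<Sum>i=1..R. p i) = 1"
    and jk: "1 \<le> j" "j < k" "k \<le> R" by auto
  define a where "a = real N * (\<Sum>i=1..<j. p i)"
  define b where "b = real N * (\<Sum>i=1..j. p i)"
  define c where "c = real N * (\<Sum>i=1..<k. p i)"
  define d where "d = real N * (\<Sum>i=1..k. p i)"
  have bj: "(\<Sum>i=1..j. p i) = (\<Sum>i=1..<j. p i) + p j" using bounds[OF nn s1, of j] jk by simp
  have bk: "(\<Sum>i=1..k. p i) = (\<Sum>i=1..<k. p i) + p k" using bounds[OF nn s1, of k] jk by simp
  have ck: "(\<Sum>i=1..<k. p i) = (\<Sum>i=1..j. p i) + (\<Sum>i=j+1..<k. p i)"
    using jk sum.atLeastLessThan_concat[of 1 "Suc j" k p] by (simp add: atLeastLessThanSuc_atLeastAtMost[symmetric] del: sum.op_ivl_Suc)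
  have ba: "b - a = real N * p j" unfolding a_def b_def bj by (simp add: algebra_simps)
  have cb: "c - b = real N * (\<Sum>i=j+1..<k. p i)" unfolding c_def b_def ck by (simp add: algebra_simps)
  have dc: "d - c = real N * p k" unfolding c_def d_def bk by (simp add: algebra_simps)
  have "covar unif01 (\<lambda>u. real (sys_count N p j u)) (\<lambda>u. real (sys_count N p k u))
      = covar unif01 (\<lambda>u. of_int (\<lfloor>b\<rfloor> - \<lfloor>a\<rfloor>) + indicator {1 - frac b<..} u - indicator {1 - frac a<..} u)
                     (\<lambda>u. of_int (\<lfloor>d\<rfloor> - \<lfloor>c\<rfloor>) + indicator {1 - frac d<..} u - indicator {1 - frac c<..} u)"
  proof (rule covar_cong)
    show "(\<lambda>u. real (sys_count N p j u)) \<in> borel_measurable borel" by (rule sys_meas)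
    show "(\<lambda>u. real (sys_count N p k u)) \<in> borel_measurable borel" by (rule sys_meas)
    show "(\<lambda>u. of_int (\<lfloor>b\<rfloor> - \<lfloor>a\<rfloor>) + indicator {1 - frac b<..} u - indicator {1 - frac a<..} u :: real) \<in> borel_measurable borel"
      by measurable
    show "(\<lambda>u. of_int (\<lfloor>d\<rfloor> - \<lfloor>c\<rfloor>) + indicator {1 - frac d<..} u - indicator {1 - frac c<..} u :: real) \<in> borel_measurable borel"
      by measurable
    fix u :: real assume u: "u \<in> {0<..<1}"
    show "real (sys_count N p j u) = of_int (\<lfloor>b\<rfloor> - \<lfloor>a\<rfloor>) + indicator {1 - frac b<..} u - indicator {1 - frac a<..} u \<and>
          real (sys_count N p k u) = of_int (\<lfloor>d\<rfloor> - \<lfloor>c\<rfloor>) + indicator {1 - frac d<..} u - indicator {1 - frac c<..} u"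
      using step_form[OF nn s1 _ _ u, of j N] step_form[OF nn s1 _ _ u, of k N] jk
      unfolding a_def b_def c_def d_def by simp
  qed
  also have "\<dots> = Cv (1 - frac b) (1 - frac d) - Cv (1 - frac b) (1 - frac c) - Cv (1 - frac a) (1 - frac d)
     + Cv (1 - frac a) (1 - frac c)"
    by (rule covar_step) (auto simp: frac_lt_1 less_imp_le)
  also have "\<dots> = FF (frac (b - a)) (frac (c - b)) (frac (d - c))" by (rule final_alg)
  finally show "covar unif01 (\<lambda>u. real (sys_count N p j u)) (\<lambda>u. real (sys_count N p k u))
          = FF (frac (real N * p j)) (frac (real N * (\<Sum>i=j+1..<k. p i))) (frac (real N * p k))"
    unfolding ba cb dc .
qed

end
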